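(* Let $1\le t\le k$ be integers and let $0\le\alpha<\frac{t+1}{k+1}$. Then there exists an election $(V,A,\succ)$ with $|A|\ge k$ such that no set $C\subseteq A$ with $|C|=k$ is $(t,\alpha)$-undominated.
   Context: An election $(V,A,\succ)$: finite nonempty voter set $V$ with $n=|V|$, finite candidate set $A$, and for each voter $v$ a strict linear order $\succ_v$ on $A$. For a voter $v$, a set $C\subseteq A$ with $|C|\ge t$ and $a\in A\setminus C$: $C\succ_v^t a$ iff $|\{c\in C: c\succ_v a\}|\ge t$; otherwise we write $a\succ_v^t C$. A set $C\subseteq A$ is $(t,\alpha)$-undominated if $|C|\ge t$ and for every $a\in A\setminus C$, $|\{v\in V: a\succ_v^t C\}|\le\lfloor\alpha n\rfloor$. *)

theory Defs
  imports Main Complex_Main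
begin

text \<open>An election: finite nonempty voter set V, finite candidate set A, and for each
voter v a strict linear order P v on A, where (a, b) \<in> P v means a is preferred to b by v.\<close>
definition election :: "'v set \<Rightarrow> 'c set \<Rightarrow> ('v \<Rightarrow> 'c rel) \<Rightarrow> bool" where
  "election V A P \<longleftrightarrow> finite V \<and> V \<noteq> {} \<and> finite A \<and>
     (\<forall>v\<in>V. strict_linear_order_on A (P v) \<and> P v \<subseteq> A \<times> A)"

definition t_beats :: "('v \<Rightarrow> 'c rel) \<Rightarrow> 'v \<Rightarrow> nat \<Rightarrow> 'c set \<Rightarrow> 'c \<Rightarrow> bool" where
  "t_beats P v t C a \<longleftrightarrow> t \<le> card {c \<in> C. (c, a) \<in> P v}"

definition undominated ::
  "'v set \<Rightarrow> 'c set \<Rightarrow> ('v \<Rightarrow> 'c rel) \<Rightarrow> nat \<Rightarrow> real \<Rightarrow> 'c set \<Rightarrow> bool" where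
  "undominated V A P t \<alpha> C \<longleftrightarrow> C \<subseteq> A \<and> t \<le> card C \<and>
     (\<forall>a \<in> A - C. int (card {v \<in> V. \<not> t_beats P v t C a}) \<le> \<lfloor>\<alpha> * real (card V)\<rfloor>)"

end

theory Submission
  imports Defs
begin

definition rk :: "nat \<Rightarrow> nat \<Rightarrow> nat \<Rightarrow> nat" where
  "rk M s x = (if s \<le> x then x - s else x + M - s)"
definition ad :: "nat \<Rightarrow> nat \<Rightarrow> nat \<Rightarrow> nat" where
  "ad M r i = (if r + i < M then r + i else r + i - M)"
definition key :: "nat \<Rightarrow> nat \<Rightarrow> nat \<Rightarrow> nat \<Rightarrow> nat" where
  "key R L v c = rk R (v div L) (c div L) * L + rk L (v mod L) (c mod L)"
definition pref :: "nat \<Rightarrow> nat \<Rightarrow> nat \<Rightarrow> nat rel" where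
  "pref R L v = {(a,b). a < R*L \<and> b < R*L \<and> key R L v a < key R L v b}"

lemma rk_lt: "s < M \<Longrightarrow> x < M \<Longrightarrow> rk M s x < M"
  by (auto simp: rk_def)
lemma rk_inj: "s < M \<Longrightarrow> x < M \<Longrightarrow> x' < M \<Longrightarrow> rk M s x = rk M s x' \<Longrightarrow> x = x'"
  by (auto simp: rk_def split: if_splits)
lemma rk_ad: "r < M \<Longrightarrow> i < M \<Longrightarrow> rk M r (ad M r i) = i"
  by (auto simp: rk_def ad_def)
lemma ad_lt: "r < M \<Longrightarrow> i < M \<Longrightarrow> ad M r i < M"
  by (auto simp: ad_def)
lemma ad_inj: "r < M \<Longrightarrow> i < M \<Longrightarrow> i' < M \<Longrightarrow> ad M r i = ad M r i' \<Longrightarrow> i = i'"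
  by (auto simp: ad_def split: if_splits)
lemma rk_trans: "r < M \<Longrightarrow> s < M \<Longrightarrow> x < M \<Longrightarrow>
  rk M r x = (if rk M r s + rk M s x < M then rk M r s + rk M s x else rk M r s + rk M s x - M)"
  by (auto simp: rk_def)

lemma rk_sj:
  assumes "r < M" "s < M" "j < M" "rk M r s = i" "rk M r j = t" "i \<le> t"
  shows "rk M s j = t - i"
  using rk_trans[OF assms(1,2,3)] rk_lt[OF assms(2,3)] assms(4-6) by (auto split: if_splits)

lemma rk_sx:
  assumes "r < M" "s < M" "x < M" "rk M r s = i" "i + rk M s x < t" "t < M"
  shows "rk M r x < t"
  using rk_trans[OF assms(1,2,3)] assms(4-6) by (auto split: if_splits)

lemma lin_le:
  fixes q1 q2 w1 w2 L :: nat
  assumes "w1 < L" "w2 < L" "q1*L + w1 \<le> q2*L + w2"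
  shows "q1 \<le> q2"
proof (rule ccontr)
  assume "\<not> q1 \<le> q2"
  then have "(q2+1)*L \<le> q1*L" by (intro mult_le_mono1) simp
  then show False using assms by (simp add: algebra_simps)
qed

lemma key_parts:
  assumes "L > 0"
  shows "key R L v c = rk R (v div L) (c div L) * L + rk L (v mod L) (c mod L)"
    and "rk L (v mod L) (c mod L) < L"
  using assms by (auto simp: key_def intro: rk_lt)

lemma key_inj:
  assumes "L > 0" "v < R*L" "a < R*L" "b < R*L" "key R L v a = key R L v b"
  shows "a = b"
proof -
  have vR: "v div L < R" using assms by (simp add: less_mult_imp_div_less)
  have aR: "a div L < R" using assms by (simp add: less_mult_imp_div_less)
  have bR: "b div L < R" using assms by (simp add: less_mult_imp_div_less)
  let ?qa = "rk R (v div L) (a div L)" and ?qb = "rk R (v div L) (b div L)"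
  let ?wa = "rk L (v mod L) (a mod L)" and ?wb = "rk L (v mod L) (b mod L)"
  have wa: "?wa < L" and wb: "?wb < L" using assms(1) by (auto intro: rk_lt)
  have e: "?qa * L + ?wa = ?qb * L + ?wb" using assms(5) by (simp add: key_def)
  have "?qa \<le> ?qb" using lin_le[OF wa wb] e by simp
  moreover have "?qb \<le> ?qa" using lin_le[OF wb wa] e by simp
  ultimately have q: "?qa = ?qb" by simp
  with e have w: "?wa = ?wb" by simp
  have "a div L = b div L" using rk_inj[OF vR aR bR q] .
  moreover have "a mod L = b mod L" using rk_inj[OF _ _ _ w] assms(1) by simp
  ultimately show ?thesis by (metis div_mult_mod_eq)
qed


lemma cycle:
  fixes C :: "nat set" and R L :: nat
  assumes L: "L > 0" and R: "R > 0" and CA: "C \<subseteq> {..<R*L}" and cC: "card C + 1 = R"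
  shows "\<exists>r<R. \<forall>d. 1 \<le> d \<and> d \<le> R \<longrightarrow> card {c\<in>C. rk R r (c div L) < d} + 1 \<le> d"
proof -
  have fin: "finite C" using CA finite_subset by blast
  define G where "G i = card {c\<in>C. c div L < i}" for i
  define H where "H i = int i - int (G i)" for i
  have rowlt: "c div L < R" if "c \<in> C" for c
    using that CA L by (auto simp: less_mult_imp_div_less)
  have GR: "G R = card C" unfolding G_def using rowlt by (metis (no_types, lifting) Collect_cong Collect_mem_eq)
  have H0: "H 0 = 0" by (simp add: H_def G_def)
  have HR: "H R = 1" using GR cC by (simp add: H_def)
  have Gmono: "G i \<le> G i'" if "i \<le> i'" for i i'
    unfolding G_def using that fin by (intro card_mono) auto
  define m where "m = Min (H ` {..<R})"
  have mle: "m \<le> H i" if "i < R" for i using that by (simp add: m_def)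
  have mex: "m \<in> H ` {..<R}" unfolding m_def using R by (intro Min_in) auto
  define S where "S = {i. i < R \<and> H i = m}"
  have Sfin: "finite S" by (simp add: S_def)
  have Sne: "S \<noteq> {}" using mex by (auto simp: S_def)
  define r where "r = Max S"
  have rS: "r \<in> S" unfolding r_def using Sfin Sne by (rule Max_in)
  have rR: "r < R" and Hr: "H r = m" using rS by (auto simp: S_def)
  have rmax: "i \<le> r" if "i < R" "H i = m" for i
    unfolding r_def using Sfin that by (intro Max_ge) (auto simp: S_def)
  have m0: "m \<le> 0" using mle[of 0] H0 R by simp
  show ?thesis
  proof (intro exI[of _ r] conjI allI impI rR)
    fix d assume d: "1 \<le> d \<and> d \<le> R"
    show "card {c\<in>C. rk R r (c div L) < d} + 1 \<le> d"
    proof (cases "r + d \<le> R")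
      case True
      have eq: "{c\<in>C. rk R r (c div L) < d} = {c\<in>C. c div L < r + d} - {c\<in>C. c div L < r}"
        using rowlt True by (auto simp: rk_def)
      have c1: "card {c\<in>C. rk R r (c div L) < d} = G (r+d) - G r"
        unfolding eq G_def using fin by (subst card_Diff_subset) auto
      have "H (r + d) > H r"
      proof (cases "r + d < R")
        case True
        then have "H (r+d) \<noteq> m" using rmax[of "r+d"] d by auto
        then show ?thesis using mle[OF True] Hr by simp
      next
        case False
        then have "r + d = R" using \<open>r + d \<le> R\<close> by simp
        then show ?thesis using HR Hr m0 by simp
      qed
      then have "int (G (r+d)) - int (G r) < int d" by (simp add: H_def)
      then show ?thesis using c1 Gmono[of r "r+d"] by linarith
    next
      case False
      define i' where "i' = r + d - R"
      have i'r: "i' \<le> r" using d unfolding i'_def by linarith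
      have sub: "{c\<in>C. rk R r (c div L) < d} \<subseteq> (C - {c\<in>C. c div L < r}) \<union> {c\<in>C. c div L < i'}"
        using rowlt False by (auto simp: rk_def i'_def)
      have "card {c\<in>C. rk R r (c div L) < d} \<le> card ((C - {c\<in>C. c div L < r}) \<union> {c\<in>C. c div L < i'})"
        using fin by (intro card_mono[OF _ sub]) auto
      also have "\<dots> \<le> card (C - {c\<in>C. c div L < r}) + card {c\<in>C. c div L < i'}"
        by (rule card_Un_le)
      also have "card (C - {c\<in>C. c div L < r}) = card C - G r"
        unfolding G_def using fin by (subst card_Diff_subset) auto
      finally have c1: "card {c\<in>C. rk R r (c div L) < d} \<le> card C - G r + G i'"
        by (simp add: G_def)
      have "H i' \<ge> H r" using mle[of i'] Hr i'r rR by simp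
      then have "int (G i') - int (G r) \<le> int i' - int r" by (simp add: H_def)
      moreover have "G r \<le> card C" using GR Gmono[of r R] rR by simp
      ultimately show ?thesis using c1 cC False by (simp add: i'_def)
    qed
  qed
qed


lemma ad1_mod: "L > 0 \<Longrightarrow> ad L (x mod L) 1 = (x + 1) mod L"
proof -
  assume L: "L > 0"
  have "x mod L < L" using L by simp
  then show ?thesis by (auto simp: ad_def mod_Suc)
qed

lemma ck_next:
  assumes "\<theta> < L" "y < L" "\<theta> \<noteq> ad L y 1"
  shows "rk L \<theta> (ad L y 1) = rk L \<theta> y + 1"
  using assms by (auto simp: rk_def ad_def)

lemma exists_y:
  assumes L: "L > 0" and D: "D \<subseteq> {..<L}" "D \<noteq> {}" "card D < L"
  shows "\<exists>y<L. y \<notin> D \<and> ad L y 1 \<in> D"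
proof (rule ccontr)
  assume H: "\<not> ?thesis"
  have "{..<L} - D \<noteq> {}"
  proof
    assume "{..<L} - D = {}"
    then have "{..<L} \<subseteq> D" by blast
    then have "card {..<L} \<le> card D" using D(1) by (intro card_mono) (auto intro: finite_subset)
    then show False using D(3) by simp
  qed
  then obtain y0 where y0: "y0 < L" "y0 \<notin> D" by blast
  have step: "(y0 + n) mod L \<notin> D" for n
  proof (induction n)
    case 0 then show ?case using y0 by simp
  next
    case (Suc n)
    have "(y0 + n) mod L < L" using L by simp
    then have "ad L ((y0 + n) mod L) 1 \<notin> D" using H Suc by blast
    then show ?case using ad1_mod[OF L, of "y0+n"] by simp
  qed
  obtain z where "z \<in> D" using D(2) by blast
  then have zL: "z < L" using D(1) by blast
  have "(y0 + (z + L - y0)) mod L = z" using zL y0 by simp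
  then show False using step[of "z + L - y0"] \<open>z \<in> D\<close> by simp
qed


lemma divmod_simps:
  fixes L s \<theta> :: nat
  assumes "L > 0" "\<theta> < L"
  shows "(s*L + \<theta>) div L = s" "(s*L + \<theta>) mod L = \<theta>"
  using assms by simp_all

lemma lt_RL: "j < R \<Longrightarrow> y < (L::nat) \<Longrightarrow> j*L + y < R*L"
proof -
  assume a: "j < R" "y < L"
  then have "(j+1)*L \<le> R*L" by (intro mult_le_mono1) simp
  then show ?thesis using a by (simp add: algebra_simps)
qed

lemma main_a:
  assumes L: "k + 1 < L" and t: "1 \<le> t" "t \<le> k" and R: "R = k + 1"
    and CA: "C \<subseteq> {..<R*L}" and cC: "card C = k"
  shows "\<exists>a \<in> {..<R*L} - C. (t+1)*(L-1) \<le> card {v \<in> {..<R*L}. \<not> t_beats (pref R L) v t C a}"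
proof -
  have L0: "L > 0" using L by simp
  have fin: "finite C" using CA finite_subset by blast
  obtain r where rR: "r < R" and hr: "\<And>d. 1 \<le> d \<Longrightarrow> d \<le> R \<Longrightarrow> card {c\<in>C. rk R r (c div L) < d} + 1 \<le> d"
    using cycle[OF L0 _ CA] cC R by fastforce
  define j where "j = ad R r t"
  have jR: "j < R" and rkj: "rk R r j = t" using rR t R by (auto simp: j_def intro: ad_lt rk_ad)
  define D where "D = {x. x < L \<and> j*L + x \<in> C}"
  have rowD: "c mod L \<in> D" if "c \<in> C" "c div L = j" for c
    using that L0 by (auto simp: D_def)
  have DL: "D \<subseteq> {..<L}" by (auto simp: D_def)
  have cardD: "card D \<le> k"
  proof -
    have "inj_on (\<lambda>x. j*L + x) D" by (auto simp: inj_on_def)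
    moreover have "(\<lambda>x. j*L + x) ` D \<subseteq> C" by (auto simp: D_def)
    ultimately have "card D \<le> card C" using fin by (metis card_inj_on_le)
    then show ?thesis using cC by simp
  qed
  obtain y where yL: "y < L" and ynot: "j*L + y \<notin> C" and ynext: "D \<noteq> {} \<Longrightarrow> j*L + ad L y 1 \<in> C"
  proof (cases "D = {}")
    case True
    then have "j*L + 0 \<notin> C" using L0 by (auto simp: D_def)
    then show ?thesis using that[of 0] L0 True by simp
  next
    case False
    obtain y where "y < L" "y \<notin> D" "ad L y 1 \<in> D" using exists_y[OF L0 DL False] cardD L by fastforce
    then show ?thesis using that[of y] by (auto simp: D_def)
  qed
  define x0 where "x0 = ad L y 1"
  have x0L: "x0 < L" using yL L0 by (auto simp: x0_def ad_def)
  define a where "a = j*L + y"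
  have aA: "a < R*L" using lt_RL[OF jR yL] by (simp add: a_def)
  have adiv: "a div L = j" "a mod L = y" using yL L0 by (auto simp: a_def)
  define Gv where "Gv = (\<lambda>(i,\<theta>). ad R r i * L + \<theta>) ` ({..t} \<times> ({..<L} - {x0}))"
  have tR: "t < R" using t R by simp
  have injG: "inj_on (\<lambda>(i,\<theta>). ad R r i * L + \<theta>) ({..t} \<times> ({..<L} - {x0}))"
  proof (rule inj_onI)
    fix p p' assume p: "p \<in> {..t} \<times> ({..<L} - {x0})" and p': "p' \<in> {..t} \<times> ({..<L} - {x0})"
      and e: "(\<lambda>(i,\<theta>). ad R r i * L + \<theta>) p = (\<lambda>(i,\<theta>). ad R r i * L + \<theta>) p'"
    obtain i \<theta> where pe: "p = (i,\<theta>)" by (cases p)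
    obtain i' \<theta>' where pe': "p' = (i',\<theta>')" by (cases p')
    have h: "i \<le> t" "\<theta> < L" "i' \<le> t" "\<theta>' < L" using p p' pe pe' by auto
    have h7: "ad R r i * L + \<theta> = ad R r i' * L + \<theta>'" using e pe pe' by simp
    have "ad R r i = ad R r i'" using divmod_simps(1)[OF L0 h(2), of "ad R r i"] divmod_simps(1)[OF L0 h(4), of "ad R r i'"] h7 by simp
    then have "i = i'" using ad_inj[OF rR, of i i'] h tR by simp
    moreover have "\<theta> = \<theta>'" using divmod_simps(2)[OF L0 h(2), of "ad R r i"] divmod_simps(2)[OF L0 h(4), of "ad R r i'"] h7 by simp
    ultimately show "p = p'" using pe pe' by simp
  qed
  have cardG: "card Gv = (t+1)*(L-1)"
    unfolding Gv_def using x0L by (simp add: card_image[OF injG] card_cartesian_product card_Diff_singleton)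
  have Gsub: "Gv \<subseteq> {v \<in> {..<R*L}. \<not> t_beats (pref R L) v t C a}"
  proof
    fix v assume "v \<in> Gv"
    then obtain i \<theta> where it: "i \<le> t" "\<theta> < L" "\<theta> \<noteq> x0" and v: "v = ad R r i * L + \<theta>"
      by (auto simp: Gv_def)
    define s where "s = ad R r i"
    have sR: "s < R" using rR it tR by (simp add: s_def ad_lt)
    have rks: "rk R r s = i" using rR it tR by (simp add: s_def rk_ad)
    have vA: "v < R*L" using lt_RL[OF sR it(2)] by (simp add: v s_def)
    have vdm: "v div L = s" "v mod L = \<theta>" using L0 it(2) by (auto simp: v s_def)
    have rksj: "rk R s j = t - i" using rk_sj[OF rR sR jR rks rkj it(1)] .
    have ck0: "rk L \<theta> x0 = rk L \<theta> y + 1" using ck_next[OF it(2) yL] it(3) by (simp add: x0_def)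
    define Ab where "Ab = {c\<in>C. (c, a) \<in> pref R L v}"
    define W where "W d = {c\<in>C. rk R r (c div L) < d}" for d
    have Ab_sub: "Ab \<subseteq> W t \<union> ({c\<in>C. c div L = j} - {j*L + x0})"
    proof
      fix c assume "c \<in> Ab"
      then have cC': "c \<in> C" and kl: "key R L v c < key R L v a" by (auto simp: Ab_def pref_def)
      have cR: "c div L < R" using cC' CA L0 by (auto simp: less_mult_imp_div_less)
      have cmL: "c mod L < L" using L0 by simp
      let ?q = "rk R s (c div L)" and ?w = "rk L \<theta> (c mod L)"
      have wl: "?w < L" using it(2) cmL by (rule rk_lt)
      have wa: "rk L \<theta> y < L" using it(2) yL by (rule rk_lt)
      have kk: "?q * L + ?w < (t - i) * L + rk L \<theta> y"
        using kl by (simp add: key_def vdm adiv rksj)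
      have qle: "?q \<le> t - i" using lin_le[OF wl wa] kk by simp
      show "c \<in> W t \<union> ({c\<in>C. c div L = j} - {j*L + x0})"
      proof (cases "?q < t - i")
        case True
        then have "rk R r (c div L) < t" using rk_sx[OF rR sR cR rks _ tR] it(1) by simp
        then show ?thesis using cC' by (simp add: W_def)
      next
        case False
        then have qe: "?q = t - i" using qle by simp
        then have "c div L = j" using rk_inj[OF sR cR jR] rksj by simp
        moreover have "?w < rk L \<theta> y" using kk qe by simp
        then have "c mod L \<noteq> x0" using ck0 by auto
        ultimately have "c \<noteq> j*L + x0" using x0L L0 by (metis divmod_simps(2))
        then show ?thesis using cC' \<open>c div L = j\<close> by simp
      qed
    qed
    have finW: "finite (W d)" for d using fin by (simp add: W_def)
    have "card Ab < t"
    proof (cases "D = {}")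
      case True
      then have "{c\<in>C. c div L = j} = {}" using rowD by blast
      then have "Ab \<subseteq> W t" using Ab_sub by blast
      then have "card Ab \<le> card (W t)" using finW by (intro card_mono) auto
      moreover have "card (W t) + 1 \<le> t" using hr[of t] t tR by (simp add: W_def)
      ultimately show ?thesis by simp
    next
      case False
      have c0C: "j*L + x0 \<in> C" using ynext[OF False] by (simp add: x0_def)
      have c0W: "j*L + x0 \<in> W (t+1)" using c0C x0L L0 rkj by (simp add: W_def)
      have "Ab \<subseteq> W (t+1) - {j*L + x0}"
      proof
        fix c assume "c \<in> Ab"
        then have "c \<in> W t \<union> ({c\<in>C. c div L = j} - {j*L + x0})" using Ab_sub by blast
        then show "c \<in> W (t+1) - {j*L + x0}"
        proof
          assume "c \<in> W t"
          moreover have "(j*L + x0) div L = j" using x0L L0 by simp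
          ultimately show ?thesis using rkj by (auto simp: W_def)
        next
          assume "c \<in> {c\<in>C. c div L = j} - {j*L + x0}"
          then show ?thesis using rkj by (auto simp: W_def)
        qed
      qed
      then have "card Ab \<le> card (W (t+1) - {j*L + x0})" using finW by (intro card_mono) auto
      also have "\<dots> = card (W (t+1)) - 1" using c0W finW by (simp add: card_Diff_singleton)
      finally show ?thesis using hr[of "t+1"] tR t(1) by (simp add: W_def)
    qed
    then show "v \<in> {v \<in> {..<R*L}. \<not> t_beats (pref R L) v t C a}"
      using vA by (simp add: t_beats_def Ab_def)
  qed
  have "card Gv \<le> card {v \<in> {..<R*L}. \<not> t_beats (pref R L) v t C a}"
    by (intro card_mono[OF _ Gsub]) simp
  then show ?thesis using aA ynot cardG by (intro bexI[of _ a]) (auto simp: a_def)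
qed


lemma pref_slo:
  assumes L0: "L > 0" and v: "v < R*L"
  shows "strict_linear_order_on {..<R*L} (pref R L v) \<and> pref R L v \<subseteq> {..<R*L} \<times> {..<R*L}"
proof -
  have "trans (pref R L v)" by (auto simp: trans_def pref_def)
  moreover have "irrefl (pref R L v)" by (auto simp: irrefl_def pref_def)
  moreover have "total_on {..<R*L} (pref R L v)"
  proof (unfold total_on_def, intro ballI impI)
    fix a b assume a: "a \<in> {..<R*L}" and b: "b \<in> {..<R*L}" and ne: "a \<noteq> b"
    have "key R L v a \<noteq> key R L v b" using key_inj[OF L0 v, of a b] a b ne by auto
    then show "(a, b) \<in> pref R L v \<or> (b, a) \<in> pref R L v" using a b by (auto simp: pref_def)
  qed
  ultimately show ?thesis by (auto simp: strict_linear_order_on_def pref_def)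
qed

theorem theorem3:
  fixes t k :: nat and \<alpha> :: real
  assumes "1 \<le> t" and "t \<le> k" and "0 \<le> \<alpha>"
    and "\<alpha> < (real t + 1) / (real k + 1)"
  shows "\<exists>(V :: nat set) (A :: nat set) (P :: nat \<Rightarrow> nat rel).
           election V A P \<and> k \<le> card A \<and>
           (\<forall>C \<subseteq> A. card C = k \<longrightarrow> \<not> undominated V A P t \<alpha> C)"
proof -
  define R where "R = k + 1"
  define gap where "gap = (real t + 1) - \<alpha> * real R"
  have "\<alpha> * (real k + 1) < real t + 1" using assms(4) by (simp add: pos_less_divide_eq)
  then have gap0: "gap > 0" by (simp add: gap_def R_def add.commute)
  define L where "L = nat \<lceil>(real t + 1) / gap\<rceil> + k + 2"
  have Lk: "k + 1 < L" by (simp add: L_def)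
  have L0: "L > 0" using Lk by simp
  have "real L \<ge> (real t + 1) / gap + 1"
  proof -
    have "real (nat \<lceil>(real t + 1) / gap\<rceil>) \<ge> (real t + 1) / gap" by linarith
    then show ?thesis by (simp add: L_def)
  qed
  then have "real L * gap > real t + 1"
    using gap0 by (simp add: field_simps)
  then have key_ineq: "(real t + 1) * (real L - 1) > \<alpha> * real R * real L"
    by (simp add: gap_def algebra_simps)
  define A where "A = {..<R*L}"
  define P where "P = pref R L"
  show ?thesis
  proof (intro exI[of _ A] exI[of _ A] exI[of _ P] conjI allI impI)
    show "election A A P"
      proof -
        have "R * L > 0" using L0 by (simp add: R_def)
        then have "0 \<in> {..<R*L}" by simp
        then show ?thesis unfolding election_def A_def P_def using pref_slo[OF L0] by blast
      qed
    show "k \<le> card A" unfolding A_def using Lk by (simp add: R_def)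
    fix C assume CA: "C \<subseteq> A" and cC: "card C = k"
    show "\<not> undominated A A P t \<alpha> C"
    proof
      assume U: "undominated A A P t \<alpha> C"
      obtain a where aA: "a \<in> A - C"
        and ca: "(t+1)*(L-1) \<le> card {v \<in> A. \<not> t_beats P v t C a}"
        using main_a[OF Lk assms(1,2) R_def _ cC] CA by (auto simp: A_def P_def)
      have "int (card {v \<in> A. \<not> t_beats P v t C a}) \<le> \<lfloor>\<alpha> * real (card A)\<rfloor>"
        using U aA by (auto simp: undominated_def)
      then have "real (card {v \<in> A. \<not> t_beats P v t C a}) \<le> \<alpha> * real (card A)"
        by linarith
      moreover have "real ((t+1)*(L-1)) \<le> real (card {v \<in> A. \<not> t_beats P v t C a})"
        using ca by linarith
      moreover have "real ((t+1)*(L-1)) = (real t + 1) * (real L - 1)"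
      proof -
        have "real (L - 1) = real L - 1" using L0 by (simp add: of_nat_diff)
        then show ?thesis by (simp only: of_nat_mult) simp
      qed
      moreover have "card A = R * L" by (simp add: A_def)
      ultimately show False using key_ineq by (simp add: algebra_simps)
    qed
  qed
qed

end
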